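(* Let $G=(V,E)$ be a finite undirected (symmetric) graph with real edge weights, and let $P=\{S_1,\dots,S_n\}$ be a partition of $V$ with $n\ge 2$. Assume minimum spanning forests of all graphs considered here are unique. For $1\le i<j\le n$ let $G[S_i\cup S_j]$ be the subgraph of $G$ induced by $S_i\cup S_j$. Then \[\mathrm{MSF}(G)=\mathrm{MSF}\Big(\bigcup_{1\le i<j\le n}\mathrm{MSF}\big(G[S_i\cup S_j]\big)\Big),\] where the union is the graph on vertex set $V$ whose edge set is the union of the edge sets of the forests $\mathrm{MSF}(G[S_i\cup S_j])$, with edge weights inherited from $G$.
   Context: For a weighted undirected graph $H$, $\mathrm{MSF}(H)$ denotes its minimum spanning forest (a spanning forest consisting of a minimum spanning tree of each connected component of $H$, minimizing total edge weight), regarded as a set of edges. For $S\subseteq V$, $G[S]$ is the induced subgraph on $S$: vertex set $S$ and all edges of $G$ with both endpoints in $S$, with the same weights. *)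

theory Defs
  imports Complex_Main
begin

definition graph :: "'a set \<Rightarrow> 'a set set \<Rightarrow> bool" where
  "graph V E \<longleftrightarrow> finite V \<and> (\<forall>e\<in>E. \<exists>u v. e = {u, v} \<and> u \<noteq> v \<and> u \<in> V \<and> v \<in> V)"

definition connected_in :: "'a set set \<Rightarrow> 'a \<Rightarrow> 'a \<Rightarrow> bool" where
  "connected_in E u v \<longleftrightarrow> (\<lambda>x y. {x, y} \<in> E)\<^sup>*\<^sup>* u v"

text \<open>A forest: no edge lies on a cycle, i.e. removing any edge disconnects its endpoints.\<close>
definition forest :: "'a set set \<Rightarrow> bool" where
  "forest F \<longleftrightarrow> (\<forall>u v. {u, v} \<in> F \<longrightarrow> \<not> connected_in (F - {{u, v}}) u v)"

definition spanning_forest :: "'a set \<Rightarrow> 'a set set \<Rightarrow> 'a set set \<Rightarrow> bool" where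
  "spanning_forest V E F \<longleftrightarrow> F \<subseteq> E \<and> forest F \<and>
     (\<forall>u\<in>V. \<forall>v\<in>V. connected_in E u v \<longrightarrow> connected_in F u v)"

definition is_msf :: "'a set \<Rightarrow> 'a set set \<Rightarrow> ('a set \<Rightarrow> real) \<Rightarrow> 'a set set \<Rightarrow> bool" where
  "is_msf V E w F \<longleftrightarrow> spanning_forest V E F \<and>
     (\<forall>F'. spanning_forest V E F' \<longrightarrow> sum w F \<le> sum w F')"

text \<open>The minimum spanning forest (meaningful when it is unique).\<close>
definition MSF :: "'a set \<Rightarrow> 'a set set \<Rightarrow> ('a set \<Rightarrow> real) \<Rightarrow> 'a set set" where
  "MSF V E w = (THE F. is_msf V E w F)"

definition unique_msf :: "'a set \<Rightarrow> 'a set set \<Rightarrow> ('a set \<Rightarrow> real) \<Rightarrow> bool" where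
  "unique_msf V E w \<longleftrightarrow> (\<exists>!F. is_msf V E w F)"

definition induced_edges :: "'a set set \<Rightarrow> 'a set \<Rightarrow> 'a set set" where
  "induced_edges E S = {e \<in> E. e \<subseteq> S}"

end

theory Submission
  imports Defs
begin

lemma conn_refl: "connected_in F u u"
  unfolding connected_in_def by simp

lemma conn_edge: "{u, v} \<in> F \<Longrightarrow> connected_in F u v"
  unfolding connected_in_def by (rule r_into_rtranclp)

lemma conn_trans: "connected_in F u v \<Longrightarrow> connected_in F v x \<Longrightarrow> connected_in F u x"
  unfolding connected_in_def by (rule rtranclp_trans)

lemma conn_sym: "connected_in F u v \<Longrightarrow> connected_in F v u"
  unfolding connected_in_def
proof (induction rule: rtranclp_induct)
  case base then show ?case by simp
next
  case (step y z)
  from step.hyps(2) have "{z, y} \<in> F" by (simp add: insert_commute)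
  then show ?case using step.IH by (rule converse_rtranclp_into_rtranclp)
qed

lemma conn_sub:
  assumes "\<And>x y. {x, y} \<in> F \<Longrightarrow> connected_in F' x y" "connected_in F u v"
  shows "connected_in F' u v"
  using assms(2) unfolding connected_in_def
proof (induction rule: rtranclp_induct)
  case base then show ?case by simp
next
  case (step y z)
  have "connected_in F' y z" using assms(1) step.hyps(2) by blast
  then show ?case using step.IH unfolding connected_in_def by (rule rtranclp_trans[rotated])
qed

lemma conn_mono: "F \<subseteq> F' \<Longrightarrow> connected_in F u v \<Longrightarrow> connected_in F' u v"
  by (rule conn_sub[of F F']) (auto intro: conn_edge)

lemma conn_closed:
  assumes "\<And>x y. {x, y} \<in> F \<Longrightarrow> x \<in> A \<Longrightarrow> y \<in> A" "connected_in F u v" "u \<in> A"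
  shows "v \<in> A"
  using assms(2,3) unfolding connected_in_def
  by (induction rule: rtranclp_induct) (auto intro: assms(1))

lemma conn_cut:
  assumes "connected_in (insert {a, b} F) u v"
  shows "connected_in F u v \<or> (connected_in F u a \<and> connected_in F b v)
       \<or> (connected_in F u b \<and> connected_in F a v)"
  using assms unfolding connected_in_def
proof (induction rule: rtranclp_induct)
  case base then show ?case by simp
next
  case (step y z)
  from step.hyps(2) have "{y, z} \<in> F \<or> (y = a \<and> z = b) \<or> (y = b \<and> z = a)"
    by (auto simp: doubleton_eq_iff)
  then show ?case
  proof (elim disjE)
    assume e: "{y, z} \<in> F"
    from step.IH show ?thesis
      using rtranclp.rtrancl_into_rtrancl[where r="\<lambda>x y. {x, y} \<in> F", OF _ e] by blast
  next
    assume "y = a \<and> z = b"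
    with step.IH show ?thesis
      using conn_sym[unfolded connected_in_def] by blast
  next
    assume "y = b \<and> z = a"
    with step.IH show ?thesis
      using conn_sym[unfolded connected_in_def] by blast
  qed
qed

lemma forest_remove:
  assumes F: "forest F" and D: "\<forall>f\<in>F. \<exists>a b. f = {a, b}" and X: "finite X"
    and all: "\<forall>f\<in>X. connected_in (F - {f}) u v" and c: "connected_in F u v"
  shows "connected_in (F - X) u v"
  using X all
proof (induction X rule: finite_induct)
  case empty then show ?case using c by simp
next
  case (insert f X)
  then have IH: "connected_in (F - X) u v" and cf: "connected_in (F - {f}) u v" by auto
  show ?case
  proof (cases "f \<in> F - X")
    case False
    then have "F - insert f X = F - X" by auto
    then show ?thesis using IH by simp
  next
    case True
    then obtain a b where ab: "f = {a, b}" using D by blast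
    have eq: "F - X = insert {a, b} (F - insert f X)" using True ab by auto
    have sub: "F - insert f X \<subseteq> F - {f}" by auto
    have nab: "\<not> connected_in (F - {f}) a b" using F True ab unfolding forest_def by auto
    from conn_cut[of a b "F - insert f X" u v] IH eq
    have "connected_in (F - insert f X) u v
       \<or> (connected_in (F - insert f X) u a \<and> connected_in (F - insert f X) b v)
       \<or> (connected_in (F - insert f X) u b \<and> connected_in (F - insert f X) a v)" by simp
    then show ?thesis
    proof (elim disjE conjE)
      assume h: "connected_in (F - insert f X) u a" "connected_in (F - insert f X) b v"
      then have "connected_in (F - {f}) a b"
        using conn_mono[OF sub] cf by (meson conn_sym conn_trans)
      with nab show ?thesis by simp
    next
      assume h: "connected_in (F - insert f X) u b" "connected_in (F - insert f X) a v"
      then have "connected_in (F - {f}) a b"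
        using conn_mono[OF sub] cf by (meson conn_sym conn_trans)
      with nab show ?thesis by simp
    qed simp
  qed
qed

lemma exchange:
  fixes w :: "'a set \<Rightarrow> real"
  assumes SF: "spanning_forest V E F" and fin: "finite F" and f: "{x, y} \<in> F"
    and abE: "{a, b} \<in> E" and cab: "connected_in F a b"
    and ncab: "\<not> connected_in (F - {{x, y}}) a b"
  shows "spanning_forest V E (insert {a, b} (F - {{x, y}}))
     \<and> sum w (insert {a, b} (F - {{x, y}})) = sum w F - w {x, y} + w {a, b}"
proof -
  define F2 where "F2 = insert {a, b} (F - {{x, y}})"
  have abn: "{a, b} \<notin> F - {{x, y}}"
    using ncab conn_edge by metis
  have forF: "forest F" and FE: "F \<subseteq> E" using SF unfolding spanning_forest_def by auto
  have F2F: "connected_in F p q" if "connected_in F2 p q" for p q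
    using that
    by (rule conn_sub[rotated]) (auto simp: F2_def cab doubleton_eq_iff intro: conn_edge conn_sym)
  have sub1: "F - {{x, y}} \<subseteq> F2" by (auto simp: F2_def)
  have cxy: "connected_in F2 x y"
  proof -
    have "insert {x, y} (F - {{x, y}}) = F" using f by auto
    then have "connected_in (insert {x, y} (F - {{x, y}})) a b" using cab by simp
    from conn_cut[OF this] ncab
    have "(connected_in (F - {{x, y}}) a x \<and> connected_in (F - {{x, y}}) y b)
       \<or> (connected_in (F - {{x, y}}) a y \<and> connected_in (F - {{x, y}}) x b)" by blast
    moreover have "connected_in F2 a b" by (auto simp: F2_def intro: conn_edge)
    ultimately show ?thesis
      using conn_mono[OF sub1] by (meson conn_sym conn_trans)
  qed
  have FF2: "connected_in F2 p q" if "connected_in F p q" for p q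
    using that
  proof (rule conn_sub[rotated])
    fix s t assume "{s, t} \<in> F"
    show "connected_in F2 s t"
    proof (cases "{s, t} = {x, y}")
      case True
      then show ?thesis using cxy by (auto simp: doubleton_eq_iff intro: conn_sym)
    next
      case False
      then show ?thesis using \<open>{s, t} \<in> F\<close> by (auto simp: F2_def intro: conn_edge)
    qed
  qed
  have forF2: "forest F2"
    unfolding forest_def
  proof (intro allI impI notI)
    fix p q assume pq: "{p, q} \<in> F2" and cpq: "connected_in (F2 - {{p, q}}) p q"
    show False
    proof (cases "{p, q} = {a, b}")
      case True
      then have "F2 - {{p, q}} = F - {{x, y}}" using abn by (auto simp: F2_def)
      with cpq True have "connected_in (F - {{x, y}}) p q" by simp
      with True ncab show False by (auto simp: doubleton_eq_iff dest: conn_sym)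
    next
      case False
      with pq have pqF: "{p, q} \<in> F - {{x, y}}" by (auto simp: F2_def)
      define H where "H = F - {{x, y}} - {{p, q}}"
      have "F2 - {{p, q}} = insert {a, b} H" using False by (auto simp: F2_def H_def)
      with cpq have "connected_in (insert {a, b} H) p q" by simp
      from conn_cut[OF this]
      have "connected_in H p q \<or> (connected_in H p a \<and> connected_in H b q)
         \<or> (connected_in H p b \<and> connected_in H a q)" .
      moreover have "\<not> connected_in H p q"
      proof
        assume "connected_in H p q"
        then have "connected_in (F - {{p, q}}) p q" by (rule conn_mono[rotated]) (auto simp: H_def)
        with forF pqF show False unfolding forest_def by auto
      qed
      moreover have HF: "H \<subseteq> F - {{x, y}}" by (auto simp: H_def)
      moreover have "connected_in (F - {{x, y}}) p q" using pqF by (rule conn_edge)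
      ultimately have "connected_in (F - {{x, y}}) a b"
        using conn_mono[OF HF] by (meson conn_sym conn_trans)
      with ncab show False by simp
    qed
  qed
  have "spanning_forest V E F2"
    using SF forF2 FF2 abE unfolding spanning_forest_def F2_def by (auto)
  moreover have "sum w F2 = sum w F - w {x, y} + w {a, b}"
  proof -
    have "sum w F2 = w {a, b} + sum w (F - {{x, y}})"
      unfolding F2_def using abn fin by simp
    also have "sum w (F - {{x, y}}) = sum w F - w {x, y}"
      using sum.remove[OF fin f, of w] by linarith
    finally show ?thesis by simp
  qed
  ultimately show ?thesis unfolding F2_def by simp
qed

lemma graph_finite: "graph V E \<Longrightarrow> finite E"
  unfolding graph_def
  by (rule finite_subset[of E "Pow V"]) auto

lemma graph_edge_in: "graph V E \<Longrightarrow> {x, y} \<in> E \<Longrightarrow> x \<in> V \<and> y \<in> V"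
  unfolding graph_def by (auto simp: doubleton_eq_iff)

lemma graph_edge_form:
  assumes "graph V E" "f \<in> E"
  shows "\<exists>a b. f = {a, b} \<and> a \<noteq> b \<and> a \<in> V \<and> b \<in> V"
proof -
  have "\<forall>e\<in>E. \<exists>u v. e = {u, v} \<and> u \<noteq> v \<and> u \<in> V \<and> v \<in> V"
    using assms(1) unfolding graph_def by (rule conjunct2)
  then show ?thesis using assms(2) by (rule bspec)
qed

lemma sf_conn: "spanning_forest V E F \<Longrightarrow> u \<in> V \<Longrightarrow> v \<in> V \<Longrightarrow> connected_in E u v
  \<Longrightarrow> connected_in F u v"
  unfolding spanning_forest_def by simp

lemma key:
  fixes w :: "'a set \<Rightarrow> real"
  assumes G: "graph V E"
    and T: "is_msf V E w T" and uT: "\<forall>F. is_msf V E w F \<longrightarrow> F = T"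
    and eT: "{u, v} \<in> T"
    and T': "is_msf V' E' w T'" and E'E: "E' \<subseteq> E" and eE': "{u, v} \<in> E'"
    and uv': "u \<in> V'" "v \<in> V'"
  shows "{u, v} \<in> T'"
proof (rule ccontr)
  assume enT': "{u, v} \<notin> T'"
  have finE: "finite E" using G by (rule graph_finite)
  have SFT: "spanning_forest V E T" using T unfolding is_msf_def by simp
  have SFT': "spanning_forest V' E' T'" using T' unfolding is_msf_def by simp
  have TE: "T \<subseteq> E" and forT: "forest T" using SFT unfolding spanning_forest_def by auto
  have T'E': "T' \<subseteq> E'" and forT': "forest T'" using SFT' unfolding spanning_forest_def by auto
  have finT: "finite T" using TE finE by (rule finite_subset)
  have "T' \<subseteq> E" using T'E' E'E by (rule subset_trans)
  then have finT': "finite T'" using finE by (rule finite_subset)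
  have cuvT': "connected_in T' u v"
    by (rule sf_conn[OF SFT' uv' conn_edge[OF eE']])
  define T0 where "T0 = T - {{u, v}}"
  define A where "A = {z. connected_in T0 u z}"
  have uA: "u \<in> A" by (simp add: A_def conn_refl)
  have "\<not> connected_in (T - {{u, v}}) u v" using forT eT unfolding forest_def by blast
  then have vA: "v \<notin> A" unfolding A_def T0_def by simp
  define X where "X = {g \<in> T'. \<exists>x y. g = {x, y} \<and> x \<in> A \<and> y \<notin> A}"
  have nX: "\<not> connected_in (T' - X) u v"
  proof
    assume "connected_in (T' - X) u v"
    then have "v \<in> A"
    proof (rule conn_closed[rotated])
      fix x y assume h: "{x, y} \<in> T' - X" "x \<in> A"
      show "y \<in> A"
      proof (rule ccontr)
        assume "y \<notin> A"
        have "{x, y} \<in> T'" using h(1) by simp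
        then have "{x, y} \<in> X"
          unfolding X_def using h(2) \<open>y \<notin> A\<close> by blast
        with h(1) show False by simp
      qed
    qed (rule uA)
    with vA show False by simp
  qed
  have finX: "finite X" using finT' unfolding X_def by simp
  have DT': "\<forall>f\<in>T'. \<exists>a b. f = {a, b}"
  proof
    fix f assume "f \<in> T'"
    then have "f \<in> E" using T'E' E'E by blast
    from graph_edge_form[OF G this] show "\<exists>a b. f = {a, b}"
      by metis
  qed
  have "\<not> (\<forall>f\<in>X. connected_in (T' - {f}) u v)"
    using forest_remove[OF forT' DT' finX _ cuvT'] nX by blast
  then obtain f where fX: "f \<in> X" and nf: "\<not> connected_in (T' - {f}) u v"
    by blast
  from fX have fc: "f \<in> T' \<and> (\<exists>x y. f = {x, y} \<and> x \<in> A \<and> y \<notin> A)"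
    unfolding X_def by (simp only: mem_Collect_eq)
  then have fT': "f \<in> T'" by (rule conjunct1)
  from fc have fex: "\<exists>x y. f = {x, y} \<and> x \<in> A \<and> y \<notin> A" by (rule conjunct2)
  then obtain x y where fxy: "f = {x, y}" and xA: "x \<in> A" and yA: "y \<notin> A"
    by metis
  have fE: "{x, y} \<in> E" using fT' fxy T'E' E'E by blast
  have xyV: "x \<in> V" "y \<in> V" using graph_edge_in[OF G fE] by auto
  have ncT0: "\<not> connected_in T0 x y"
  proof
    assume "connected_in T0 x y"
    with xA have "y \<in> A" using conn_trans[of T0 u x y] unfolding A_def by simp
    with yA show False by simp
  qed
  have fnT: "{x, y} \<notin> T"
  proof
    assume "{x, y} \<in> T"
    moreover have "{x, y} \<noteq> {u, v}" using fT' fxy enT' by metis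
    ultimately have "{x, y} \<in> T0" unfolding T0_def by simp
    from conn_edge[OF this] ncT0 show False by contradiction
  qed
  have lt: "w {u, v} < w {x, y}"
  proof (rule ccontr)
    assume "\<not> w {u, v} < w {x, y}"
    then have le: "w {x, y} \<le> w {u, v}" by simp
    have cT: "connected_in T x y"
      by (rule sf_conn[OF SFT xyV conn_edge[OF fE]])
    from exchange[OF SFT finT eT fE cT ncT0[unfolded T0_def], of w]
    have SF2: "spanning_forest V E (insert {x, y} T0)"
      and s2: "sum w (insert {x, y} T0) = sum w T - w {u, v} + w {x, y}"
      unfolding T0_def by auto
    have "is_msf V E w (insert {x, y} T0)"
      unfolding is_msf_def
    proof (intro conjI allI impI SF2)
      fix F' assume "spanning_forest V E F'"
      then have "sum w T \<le> sum w F'" using T unfolding is_msf_def by blast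
      then show "sum w (insert {x, y} T0) \<le> sum w F'" using s2 le by linarith
    qed
    then have "insert {x, y} T0 = T" using uT by blast
    with fnT show False by blast
  qed
  have cT'uv: "connected_in T' u v" by (rule cuvT')
  from exchange[OF SFT' finT' fT'[unfolded fxy] eE' cT'uv nf[unfolded fxy], of w]
  have SF3: "spanning_forest V' E' (insert {u, v} (T' - {{x, y}}))"
    and s3: "sum w (insert {u, v} (T' - {{x, y}})) = sum w T' - w {x, y} + w {u, v}"
    by auto
  have "sum w T' \<le> sum w (insert {u, v} (T' - {{x, y}}))"
    using T' SF3 unfolding is_msf_def by blast
  with s3 lt show False by linarith
qed

lemma pick_pair:
  fixes i j n :: nat
  assumes "i \<in> {1..n}" "j \<in> {1..n}" "n \<ge> 2"
  shows "\<exists>i' j'. 1 \<le> i' \<and> i' < j' \<and> j' \<le> n \<and> (i = i' \<or> i = j') \<and> (j = i' \<or> j = j')"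
proof -
  consider "i < j" | "j < i" | "i = j \<and> i < n" | "i = j \<and> i = n" using assms by force
  then show ?thesis
  proof cases
    case 1 then show ?thesis using assms by auto
  next
    case 2 then show ?thesis using assms by auto
  next
    case 3 then show ?thesis using assms by (rule_tac x=i in exI, rule_tac x=n in exI) auto
  next
    case 4 then show ?thesis using assms by (rule_tac x=1 in exI, rule_tac x=n in exI) auto
  qed
qed

theorem theorem1:
  fixes V :: "'a set" and E :: "'a set set" and w :: "'a set \<Rightarrow> real"
    and S :: "nat \<Rightarrow> 'a set" and n :: nat
  assumes G: "graph V E"
    and n2: "n \<ge> 2"
    and nonempty: "\<forall>i\<in>{1..n}. S i \<noteq> {}"
    and disjoint: "\<forall>i\<in>{1..n}. \<forall>j\<in>{1..n}. i \<noteq> j \<longrightarrow> S i \<inter> S j = {}"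
    and cover: "(\<Union>i\<in>{1..n}. S i) = V"
    and uniqG: "unique_msf V E w"
    and uniqPairs: "\<forall>i j. 1 \<le> i \<and> i < j \<and> j \<le> n \<longrightarrow>
                      unique_msf (S i \<union> S j) (induced_edges E (S i \<union> S j)) w"
    and uniqUnion: "unique_msf V
         (\<Union>{MSF (S i \<union> S j) (induced_edges E (S i \<union> S j)) w | i j. 1 \<le> i \<and> i < j \<and> j \<le> n}) w"
  shows "MSF V E w =
         MSF V (\<Union>{MSF (S i \<union> S j) (induced_edges E (S i \<union> S j)) w | i j. 1 \<le> i \<and> i < j \<and> j \<le> n}) w"
proof -
  define P where "P i j = MSF (S i \<union> S j) (induced_edges E (S i \<union> S j)) w" for i j
  define H where "H = \<Union>{MSF (S i \<union> S j) (induced_edges E (S i \<union> S j)) w | i j. 1 \<le> i \<and> i < j \<and> j \<le> n}"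
  define T where "T = MSF V E w"
  have T: "is_msf V E w T"
    using uniqG unfolding unique_msf_def T_def MSF_def by (rule theI')
  have uT: "\<forall>F. is_msf V E w F \<longrightarrow> F = T"
    using uniqG T unfolding unique_msf_def by blast
  have Pmsf: "is_msf (S i \<union> S j) (induced_edges E (S i \<union> S j)) w (P i j)"
    if "1 \<le> i" "i < j" "j \<le> n" for i j
  proof -
    have "unique_msf (S i \<union> S j) (induced_edges E (S i \<union> S j)) w"
      using uniqPairs that by blast
    then have "\<exists>!F. is_msf (S i \<union> S j) (induced_edges E (S i \<union> S j)) w F"
      unfolding unique_msf_def .
    then show ?thesis unfolding P_def MSF_def by (rule theI')
  qed
  have indE: "induced_edges E X \<subseteq> E" for X unfolding induced_edges_def by blast
  have PE: "P i j \<subseteq> E" if "1 \<le> i" "i < j" "j \<le> n" for i j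
  proof -
    have "spanning_forest (S i \<union> S j) (induced_edges E (S i \<union> S j)) (P i j)"
      using Pmsf[OF that] unfolding is_msf_def by (rule conjunct1)
    then have "P i j \<subseteq> induced_edges E (S i \<union> S j)" unfolding spanning_forest_def by (rule conjunct1)
    then show ?thesis using indE by (rule subset_trans)
  qed
  have HE: "H \<subseteq> E"
  proof
    fix e assume "e \<in> H"
    then obtain i j where ij: "1 \<le> i" "i < j" "j \<le> n" and "e \<in> P i j"
      unfolding H_def P_def by blast
    then show "e \<in> E" using PE[OF ij] by blast
  qed
  have TE: "T \<subseteq> E" and forT: "forest T" and spT: "spanning_forest V E T"
    using T unfolding is_msf_def spanning_forest_def by auto
  have TH: "T \<subseteq> H"
  proof
    fix e assume eT: "e \<in> T"
    with TE have eE: "e \<in> E" by blast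
    from graph_edge_form[OF G this] obtain a b where eab: "e = {a, b}" and abV: "a \<in> V" "b \<in> V"
      by metis
    have "a \<in> (\<Union>i\<in>{1..n}. S i)" "b \<in> (\<Union>i\<in>{1..n}. S i)" using abV cover by simp_all
    then obtain i j where ij: "i \<in> {1..n}" "j \<in> {1..n}" "a \<in> S i" "b \<in> S j"
      by blast
    from pick_pair[OF ij(1,2) n2] obtain i' j' where
      ij': "1 \<le> i'" "i' < j'" "j' \<le> n" "i = i' \<or> i = j'" "j = i' \<or> j = j'" by blast
    define V' where "V' = S i' \<union> S j'"
    have abV': "a \<in> V'" "b \<in> V'" using ij ij' unfolding V'_def by auto
    have "{a, b} \<in> E" using eE eab by simp
    moreover have "{a, b} \<subseteq> V'" using abV' by simp
    ultimately have eE': "{a, b} \<in> induced_edges E V'"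
      unfolding induced_edges_def by simp
    have PM: "is_msf V' (induced_edges E V') w (P i' j')"
      using Pmsf[OF ij'(1-3)] unfolding V'_def .
    have eT': "{a, b} \<in> T" using eT eab by simp
    have "{a, b} \<in> P i' j'"
      by (rule key[OF G T uT eT' PM indE eE' abV'])
    moreover have "P i' j' \<in> {MSF (S i \<union> S j) (induced_edges E (S i \<union> S j)) w | i j. 1 \<le> i \<and> i < j \<and> j \<le> n}"
      unfolding P_def using ij'(1-3) by blast
    ultimately have "{a, b} \<in> H" unfolding H_def by (rule UnionI[rotated])
    then show "e \<in> H" using eab by simp
  qed
  have msfH: "is_msf V H w T"
    unfolding is_msf_def spanning_forest_def
  proof (intro conjI allI impI ballI TH forT)
    fix p q assume "p \<in> V" "q \<in> V" "connected_in H p q"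
    then show "connected_in T p q"
      using sf_conn[OF spT \<open>p \<in> V\<close> \<open>q \<in> V\<close>] conn_mono[OF HE] by blast
  next
    fix F' assume sf: "F' \<subseteq> H \<and> forest F' \<and> (\<forall>u\<in>V. \<forall>v\<in>V. connected_in H u v \<longrightarrow> connected_in F' u v)"
    have "spanning_forest V E F'"
      unfolding spanning_forest_def
    proof (intro conjI ballI impI)
      show "F' \<subseteq> E" using sf HE by blast
      show "forest F'" using sf by blast
      fix p q assume "p \<in> V" "q \<in> V" "connected_in E p q"
      then have "connected_in T p q" by (rule sf_conn[OF spT])
      then have "connected_in H p q" using conn_mono[OF TH] by blast
      then show "connected_in F' p q" using sf \<open>p \<in> V\<close> \<open>q \<in> V\<close> by blast
    qed
    then show "sum w T \<le> sum w F'" using T unfolding is_msf_def by blast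
  qed
  have u: "\<exists>!F. is_msf V H w F" using uniqUnion unfolding unique_msf_def H_def .
  have "MSF V H w = T"
    unfolding MSF_def using u msfH by (rule the1_equality)
  then show ?thesis unfolding H_def T_def by simp
qed

end
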